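(* Let $\mathcal{M}=(E,r)$ be a matroid with rank function $r$ and girth at least $d+1$. Let $i$ be an integer with $d\leq i\leq |E|$, and let $A$ be a uniformly random subset of $E$ of size $i$. Then $$\mathbb{E}(r(A))\geq d+(r(E)-d)\frac{i-d}{|E|-d}.$$
   Context: The girth of a matroid is the size of its smallest circuit ($+\infty$ if it has no circuits). *)

theory Defs
  imports Main "HOL-Library.Extended_Nat"
begin

definition matroid_rank :: "'a set \<Rightarrow> ('a set \<Rightarrow> nat) \<Rightarrow> bool" where
  "matroid_rank E r \<longleftrightarrow> finite E
     \<and> (\<forall>A. A \<subseteq> E \<longrightarrow> r A \<le> card A)
     \<and> (\<forall>A B. A \<subseteq> B \<and> B \<subseteq> E \<longrightarrow> r A \<le> r B)
     \<and> (\<forall>A B. A \<subseteq> E \<and> B \<subseteq> E \<longrightarrow> r (A \<union> B) + r (A \<inter> B) \<le> r A + r B)"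

definition indep :: "'a set \<Rightarrow> ('a set \<Rightarrow> nat) \<Rightarrow> 'a set \<Rightarrow> bool" where
  "indep E r A \<longleftrightarrow> A \<subseteq> E \<and> r A = card A"

definition circuit :: "'a set \<Rightarrow> ('a set \<Rightarrow> nat) \<Rightarrow> 'a set \<Rightarrow> bool" where
  "circuit E r C \<longleftrightarrow> C \<subseteq> E \<and> \<not> indep E r C \<and> (\<forall>D. D \<subset> C \<longrightarrow> indep E r D)"

text \<open>Girth: size of a smallest circuit, \<infinity> if there is none.\<close>
definition girth :: "'a set \<Rightarrow> ('a set \<Rightarrow> nat) \<Rightarrow> enat" where
  "girth E r = Inf ((\<lambda>C. enat (card C)) ` {C. circuit E r C})"

definition expected_rank :: "'a set \<Rightarrow> ('a set \<Rightarrow> nat) \<Rightarrow> nat \<Rightarrow> real" where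
  "expected_rank E r i =
     (\<Sum>A\<in>{A. A \<subseteq> E \<and> card A = i}. real (r A)) / real (card E choose i)"

end

theory Submission
  imports Defs
begin

lemma binom_aux: "(N choose Suc i) * Suc i = (N - i) * (N choose i)"
proof (cases N)
  case 0 then show ?thesis by simp
next
  case (Suc n)
  have "(N choose Suc i) * Suc i = N * (n choose i)" using Suc Suc_times_binomial[of i n] by (simp add: mult.commute)
  also have "... = (N - i) * (N choose i)" using Suc binomial_absorb_comp[of N i] by simp
  finally show ?thesis .
qed

lemma submod_sum:
  assumes M: "matroid_rank E r" and A: "A \<subseteq> E" and F: "finite F" "F \<subseteq> E" "A \<inter> F = {}"
  shows "r (A \<union> F) + card F * r A \<le> r A + (\<Sum>e\<in>F. r (insert e A))"
  using F
proof (induction F rule: finite_induct)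
  case empty then show ?case by simp
next
  case (insert x F)
  have sub: "r ((A \<union> F) \<union> insert x A) + r ((A \<union> F) \<inter> insert x A) \<le> r (A \<union> F) + r (insert x A)"
  proof -
    have "A \<union> F \<subseteq> E" "insert x A \<subseteq> E" using insert.prems A by auto
    then show ?thesis using M unfolding matroid_rank_def by blast
  qed
  have e1: "(A \<union> F) \<union> insert x A = A \<union> insert x F" by auto
  have e2: "(A \<union> F) \<inter> insert x A = A" using insert by auto
  have IH: "r (A \<union> F) + card F * r A \<le> r A + (\<Sum>e\<in>F. r (insert e A))"
    using insert by auto
  show ?case using sub e1 e2 IH insert(1,2) by simp
qed

lemma key_per_set:
  assumes M: "matroid_rank E r" and A: "A \<subseteq> E"
  shows "r E + card (E - A) * r A \<le> r A + (\<Sum>e\<in>E - A. r (insert e A))"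
proof -
  have fin: "finite E" using M unfolding matroid_rank_def by auto
  have "A \<union> (E - A) = E" using A by auto
  then show ?thesis using submod_sum[OF M A, of "E - A"] fin by auto
qed

lemma double_count:
  assumes fin: "finite E"
  shows "(\<Sum>A\<in>{A. A \<subseteq> E \<and> card A = i}. \<Sum>e\<in>E - A. (f (insert e A) :: real))
       = real (Suc i) * (\<Sum>B\<in>{B. B \<subseteq> E \<and> card B = Suc i}. f B)"
proof -
  let ?P = "SIGMA A:{A. A \<subseteq> E \<and> card A = i}. E - A"
  let ?Q = "SIGMA B:{B. B \<subseteq> E \<and> card B = Suc i}. B"
  have "(\<Sum>A\<in>{A. A \<subseteq> E \<and> card A = i}. \<Sum>e\<in>E - A. f (insert e A))
      = (\<Sum>(A,e)\<in>?P. f (insert e A))"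
    by (rule sum.Sigma) (use fin in auto)
  also have "... = (\<Sum>(B,e)\<in>?Q. f B)"
  proof (rule sum.reindex_bij_witness[where i = "\<lambda>(B,e). (B - {e}, e)" and j = "\<lambda>(A,e). (insert e A, e)"])
    fix a assume "a \<in> ?P" then show "(\<lambda>(B,e). (B - {e}, e)) ((\<lambda>(A,e). (insert e A, e)) a) = a" by auto
  next
    fix a assume "a \<in> ?P" then show "(\<lambda>(A,e). (insert e A, e)) a \<in> ?Q"
      using fin by (auto simp: finite_subset)
  next
    fix b assume "b \<in> ?Q" then show "(\<lambda>(A,e). (insert e A, e)) ((\<lambda>(B,e). (B - {e}, e)) b) = b" by auto
  next
    fix b assume "b \<in> ?Q" then show "(\<lambda>(B,e). (B - {e}, e)) b \<in> ?P"
      using fin by (auto simp: finite_subset card_Diff_singleton)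
  next
    fix a assume "a \<in> ?P" then show "(case (\<lambda>(A,e). (insert e A, e)) a of (B,e) \<Rightarrow> f B) = (case a of (A,e) \<Rightarrow> f (insert e A))" by auto
  qed
  also have "... = (\<Sum>B\<in>{B. B \<subseteq> E \<and> card B = Suc i}. \<Sum>e\<in>B. f B)"
    by (rule sum.Sigma[symmetric]) (use fin in \<open>auto simp: finite_subset\<close>)
  also have "... = (\<Sum>B\<in>{B. B \<subseteq> E \<and> card B = Suc i}. real (Suc i) * f B)"
    by (rule sum.cong) auto
  finally show ?thesis by (simp add: sum_distrib_left)
qed

lemma dep_has_circuit:
  assumes "C \<subseteq> E" "finite E" "\<not> indep E r C"
  shows "\<exists>C'\<subseteq>C. circuit E r C'"
  using assms
proof (induction "card C" arbitrary: C rule: less_induct)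
  case less
  show ?case
  proof (cases "circuit E r C")
    case True then show ?thesis by blast
  next
    case False
    then obtain D where D: "D \<subset> C" "\<not> indep E r D" using less.prems unfolding circuit_def by blast
    have "card D < card C" using D less.prems by (meson finite_subset psubset_card_mono)
    then obtain C' where "C' \<subseteq> D" "circuit E r C'" using less.hyps[of D] D less.prems by (meson order.trans psubset_imp_subset)
    then show ?thesis using D by blast
  qed
qed

lemma small_indep:
  assumes M: "matroid_rank E r" and g: "girth E r \<ge> enat (d + 1)"
    and A: "A \<subseteq> E" "card A \<le> d"
  shows "r A = card A"
proof (rule ccontr)
  assume "r A \<noteq> card A"
  then have "\<not> indep E r A" unfolding indep_def by auto
  moreover have fin: "finite E" using M unfolding matroid_rank_def by auto
  ultimately obtain C where C: "C \<subseteq> A" "circuit E r C" using dep_has_circuit[OF A(1) fin] by auto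
  have "girth E r \<le> enat (card C)" unfolding girth_def using C by (auto intro: Inf_lower)
  moreover have "card C \<le> card A" using C A fin by (meson card_mono finite_subset)
  ultimately have "girth E r \<le> enat d" using A by (meson enat_ord_simps(1) order.trans)
  then have "enat (d+1) \<le> enat d" using g by (rule order.trans[rotated])
  then show False by simp
qed


lemma step_ineq:
  assumes M: "matroid_rank E r" and i: "i < card E"
  shows "real (card E - i) * expected_rank E r (Suc i)
         \<ge> (real (card E - i) - 1) * expected_rank E r i + real (r E)"
proof -
  define N where "N = card E"
  have fin: "finite E" using M unfolding matroid_rank_def by auto
  define S where "S = (\<lambda>k. (\<Sum>A\<in>{A. A \<subseteq> E \<and> card A = k}. real (r A)))"
  define c where "c = (\<lambda>k. real (N choose k))"
  have f: "expected_rank E r k = S k / c k" for k unfolding expected_rank_def S_def c_def N_def by simp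
  have cpos: "c i > 0" "c (Suc i) > 0" unfolding c_def N_def using i by auto
  have cid: "c (Suc i) * real (Suc i) = real (N - i) * c i"
    unfolding c_def using binom_aux[of N i] by (metis of_nat_mult)
  have cardsets: "card {A. A \<subseteq> E \<and> card A = i} = N choose i"
    unfolding N_def using n_subsets[OF fin] by simp
  have per: "real (r E) + real (N - i) * real (r A) \<le> real (r A) + (\<Sum>e\<in>E - A. real (r (insert e A)))"
    if "A \<in> {A. A \<subseteq> E \<and> card A = i}" for A
  proof -
    have "card (E - A) = N - i" using that fin unfolding N_def by (auto simp: card_Diff_subset finite_subset)
    then have "r E + (N - i) * r A \<le> r A + (\<Sum>e\<in>E - A. r (insert e A))"
      using key_per_set[OF M, of A] that by simp
    then have "real (r E + (N - i) * r A) \<le> real (r A + (\<Sum>e\<in>E - A. r (insert e A)))"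
      by (simp only: of_nat_le_iff)
    then show ?thesis by simp
  qed
  have "(\<Sum>A\<in>{A. A \<subseteq> E \<and> card A = i}. real (r E) + real (N - i) * real (r A))
     \<le> (\<Sum>A\<in>{A. A \<subseteq> E \<and> card A = i}. real (r A) + (\<Sum>e\<in>E - A. real (r (insert e A))))"
    by (rule sum_mono) (rule per)
  then have main: "c i * real (r E) + real (N - i) * S i \<le> S i + real (Suc i) * S (Suc i)"
    unfolding S_def c_def using double_count[OF fin, where i=i and f="\<lambda>B. real (r B)"] cardsets
    by (simp add: sum.distrib sum_distrib_left)
  have "real (N - i) * (S (Suc i) / c (Suc i)) = real (Suc i) * S (Suc i) / c i"
  proof -
    have "real (N - i) = c (Suc i) * real (Suc i) / c i" using cid cpos by simp
    then show ?thesis using cpos by simp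
  qed
  also have "... \<ge> (c i * real (r E) + (real (N - i) - 1) * S i) / c i"
    using main cpos by (intro divide_right_mono) (auto simp: algebra_simps)
  finally have "real (N - i) * (S (Suc i) / c (Suc i)) \<ge> real (r E) + (real (N - i) - 1) * (S i / c i)"
    using cpos by (simp add: field_simps)
  then show ?thesis unfolding f N_def by simp
qed


lemma base_val:
  assumes M: "matroid_rank E r" and g: "girth E r \<ge> enat (d + 1)" and dN: "d \<le> card E"
  shows "expected_rank E r d = real d"
proof -
  have fin: "finite E" using M unfolding matroid_rank_def by auto
  have "(\<Sum>A\<in>{A. A \<subseteq> E \<and> card A = d}. real (r A)) = (\<Sum>A\<in>{A. A \<subseteq> E \<and> card A = d}. real d)"
    by (rule sum.cong) (auto simp: small_indep[OF M g])
  also have "... = real (card E choose d) * real d" using n_subsets[OF fin, of d] by simp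
  finally show ?thesis unfolding expected_rank_def using dN by simp
qed

theorem lemma3p7:
  fixes E :: "'a set" and r :: "'a set \<Rightarrow> nat" and d i :: nat
  assumes "matroid_rank E r"
    and "girth E r \<ge> enat (d + 1)"
    and "d \<le> i" and "i \<le> card E"
  shows "expected_rank E r i
           \<ge> real d + (real (r E) - real d) * ((real i - real d) / (real (card E) - real d))"
proof -
  note M = assms(1) and g = assms(2)
  define N where "N = card E"
  define f where "f = expected_rank E r"
  define R where "R = real (r E)"
  have ind: "d + k \<le> N \<Longrightarrow> real (N - d) * f (d + k) \<ge> real (N - (d + k)) * real d + real k * R" for k
  proof (induction k)
    case 0
    then show ?case using base_val[OF M g] unfolding f_def N_def by simp
  next
    case (Suc k)
    define j where "j = d + k"
    have jN: "j < N" using Suc.prems j_def by simp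
    have IH: "real (N - d) * f j \<ge> real (N - j) * real d + real k * R" using Suc j_def by simp
    have st: "real (N - j) * f (Suc j) \<ge> (real (N - j) - 1) * f j + R"
      using step_ineq[OF M, of j] jN unfolding f_def N_def R_def by simp
    have nd: "real (N - d) \<ge> 0" by simp
    have nj1: "real (N - j) - 1 \<ge> 0" using jN by simp
    have "(real (N - j) - 1) * (real (N - j) * real d + real k * R) + real (N - d) * R
        \<le> (real (N - j) - 1) * (real (N - d) * f j) + real (N - d) * R"
      using IH nj1 by (simp add: mult_left_mono)
    also have "... = real (N - d) * ((real (N - j) - 1) * f j + R)"
      by (simp add: algebra_simps)
    also have "... \<le> real (N - d) * (real (N - j) * f (Suc j))"
      using st nd by (rule mult_left_mono)
    finally have A: "real (N - j) * (real (N - d) * f (Suc j)) \<ge> (real (N - j) - 1) * (real (N - j) * real d + real k * R) + real (N - d) * R"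
      by (simp add: algebra_simps)
    have eq: "(real (N - j) - 1) * (real (N - j) * real d + real k * R) + real (N - d) * R
        = real (N - j) * (real (N - Suc j) * real d + real (Suc k) * R)"
      using jN j_def by (simp add: of_nat_diff algebra_simps)
    have pos: "real (N - j) > 0" using jN by simp
    have "real (N - d) * f (Suc j) \<ge> real (N - Suc j) * real d + real (Suc k) * R"
      using A eq pos by (metis mult_le_cancel_left_pos)
    then show ?case using j_def by simp
  qed
  show ?thesis
  proof (cases "N = d")
    case True
    then have "i = d" using assms N_def by simp
    then show ?thesis using base_val[OF M g] assms by simp
  next
    case False
    then have pos: "real N - real d > 0" using assms N_def by simp
    obtain k where k: "i = d + k" using assms le_Suc_ex by blast
    have h: "real (N - d) * f i \<ge> real (N - i) * real d + real k * R" using ind[of k] k assms N_def by simp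
    have "real d + (R - real d) * ((real i - real d) / (real N - real d))
       = (real (N - i) * real d + real k * R) / (real N - real d)"
      using pos k assms N_def by (simp add: field_simps of_nat_diff)
    also have "... \<le> f i" using h pos assms N_def by (simp add: divide_le_eq of_nat_diff mult.commute)
    finally show ?thesis unfolding f_def R_def N_def .
  qed
qed

end
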